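(* Let $\mathcal{P}$ be a Yao-Yao partition of $\mathbb{R}^n$ whose center is $0$. Then $\mathcal{P}^*:=\{A^* : A\in\mathcal{P}\}$ is also a partition of $\mathbb{R}^n$, where for a set $C\subseteq\mathbb{R}^n$, $C^*=\{y\in\mathbb{R}^n : x\cdot y\geq 0 \text{ for all } x\in C\}$.
   Context: $x\cdot y$ is the standard scalar product on $\mathbb{R}^n$. A set $\mathcal{P}$ of subsets of an affine space $E$ is a partition of $E$ if $\bigcup\mathcal{P}=E$ and the interiors of two distinct elements of $\mathcal{P}$ do not intersect. Yao-Yao partitions and their centers are defined by induction on the dimension of a finite-dimensional real affine space $E$ (with associated vector space $\vec{E}$): if $E=\{c\}$ has dimension $0$, then $\{\{c\}\}$ is a Yao-Yao partition of $E$ with center $c$. If $E$ has dimension $n\geq 1$, $\mathcal{P}$ is a Yao-Yao partition of $E$ if there exist an affine hyperplane $F$ of $E$, a vector $v\in\vec{E}\setminus\vec{F}$, and two Yao-Yao partitions $\mathcal{P}_+$, $\mathcal{P}_-$ of $F$ having the same center $c$, such that $\mathcal{P}=\{A+\mathbb{R}_- v : A\in\mathcal{P}_-\}\cup\{A+\mathbb{R}_+ v : A\in\mathcal{P}_+\}$; the center of $\mathcal{P}$ is then $c$. *)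

theory Defs
  imports "HOL-Analysis.Analysis"
begin

definition vec_dir :: "'a::real_vector set \<Rightarrow> 'a set" where
  "vec_dir E = {x - y | x y. x \<in> E \<and> y \<in> E}"

definition ray_plus :: "'a::real_vector set \<Rightarrow> 'a \<Rightarrow> 'a set" where
  "ray_plus A v = {a + t *\<^sub>R v | a t. a \<in> A \<and> t \<ge> 0}"

definition ray_minus :: "'a::real_vector set \<Rightarrow> 'a \<Rightarrow> 'a set" where
  "ray_minus A v = {a + t *\<^sub>R v | a t. a \<in> A \<and> t \<le> 0}"

inductive yao_yao :: "'a::euclidean_space set \<Rightarrow> 'a set set \<Rightarrow> 'a \<Rightarrow> bool" where
  base: "yao_yao {c} {{c}} c"
| step: "\<lbrakk> affine E; aff_dim E \<ge> 1;
           affine F; F \<subseteq> E; aff_dim F = aff_dim E - 1;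
           v \<in> vec_dir E; v \<notin> vec_dir F;
           yao_yao F Pm c; yao_yao F Pp c \<rbrakk>
    \<Longrightarrow> yao_yao E ({ray_minus A v | A. A \<in> Pm} \<union> {ray_plus A v | A. A \<in> Pp}) c"

definition is_partition :: "'a::topological_space set \<Rightarrow> 'a set set \<Rightarrow> bool" where
  "is_partition E P \<longleftrightarrow> \<Union>P = E \<and>
     (\<forall>A\<in>P. \<forall>B\<in>P. A \<noteq> B \<longrightarrow> interior A \<inter> interior B = {})"

definition dual_cone :: "'a::real_inner set \<Rightarrow> 'a set" where
  "dual_cone C = {y. \<forall>x\<in>C. x \<bullet> y \<ge> 0}"

end

theory Submission
  imports Defs
begin

definition relint_in :: "'a::real_normed_vector set \<Rightarrow> 'a set \<Rightarrow> 'a set" where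
  "relint_in E D = {y\<in>E. \<exists>e>0. \<forall>y'\<in>E. dist y' y < e \<longrightarrow> y' \<in> D}"

lemma decomp:
  fixes y :: "'a::euclidean_space"
  assumes "subspace F"
  obtains z w where "z \<in> F" "\<And>u. u \<in> F \<Longrightarrow> w \<bullet> u = 0" "y = z + w"
proof -
  obtain z w where "z \<in> span F" "\<And>u. u \<in> span F \<Longrightarrow> orthogonal w u" "y = z + w"
    using orthogonal_subspace_decomp_exists[of F y] by blast
  then show ?thesis using that assms span_eq_iff orthogonal_def by metis
qed

lemma dual_ray_plus:
  fixes A :: "'a::real_inner set"
  assumes "0 \<in> A"
  shows "dual_cone (ray_plus A v) = {y. v \<bullet> y \<ge> 0} \<inter> dual_cone A"
proof (intro equalityI subsetI)
  fix y assume y: "y \<in> dual_cone (ray_plus A v)"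
  have "0 + 1 *\<^sub>R v \<in> ray_plus A v" unfolding ray_plus_def
    by (rule CollectI, rule exI[of _ 0], rule exI[of _ 1]) (simp add: assms)
  then have "v \<bullet> y \<ge> 0" using y unfolding dual_cone_def by force
  moreover have "a \<bullet> y \<ge> 0" if "a \<in> A" for a
  proof -
    have "a + 0 *\<^sub>R v \<in> ray_plus A v" using that unfolding ray_plus_def by force
    then show ?thesis using y unfolding dual_cone_def by force
  qed
  ultimately show "y \<in> {y. v \<bullet> y \<ge> 0} \<inter> dual_cone A" unfolding dual_cone_def by auto
next
  fix y assume y: "y \<in> {y. v \<bullet> y \<ge> 0} \<inter> dual_cone A"
  show "y \<in> dual_cone (ray_plus A v)"
    unfolding dual_cone_def ray_plus_def
  proof (safe)
    fix a and t :: real assume "a \<in> A" "t \<ge> 0"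
    then have "a \<bullet> y \<ge> 0" "v \<bullet> y \<ge> 0" using y unfolding dual_cone_def by auto
    then show "0 \<le> (a + t *\<^sub>R v) \<bullet> y" using \<open>t \<ge> 0\<close>
      by (simp add: inner_add_left)
  qed
qed

lemma dual_ray_minus:
  fixes A :: "'a::real_inner set"
  assumes "0 \<in> A"
  shows "dual_cone (ray_minus A v) = {y. v \<bullet> y \<le> 0} \<inter> dual_cone A"
proof (intro equalityI subsetI)
  fix y assume y: "y \<in> dual_cone (ray_minus A v)"
  have "0 + (-1) *\<^sub>R v \<in> ray_minus A v" unfolding ray_minus_def
    by (rule CollectI, rule exI[of _ 0], rule exI[of _ "-1"]) (simp add: assms)
  then have "v \<bullet> y \<le> 0" using y unfolding dual_cone_def by force
  moreover have "a \<bullet> y \<ge> 0" if "a \<in> A" for a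
  proof -
    have "a + 0 *\<^sub>R v \<in> ray_minus A v" using that unfolding ray_minus_def by force
    then show ?thesis using y unfolding dual_cone_def by force
  qed
  ultimately show "y \<in> {y. v \<bullet> y \<le> 0} \<inter> dual_cone A" unfolding dual_cone_def by auto
next
  fix y assume y: "y \<in> {y. v \<bullet> y \<le> 0} \<inter> dual_cone A"
  show "y \<in> dual_cone (ray_minus A v)"
    unfolding dual_cone_def ray_minus_def
  proof (safe)
    fix a and t :: real assume "a \<in> A" "t \<le> 0"
    then have "a \<bullet> y \<ge> 0" "v \<bullet> y \<le> 0" using y unfolding dual_cone_def by auto
    moreover have "t * (v \<bullet> y) \<ge> 0" using \<open>t \<le> 0\<close> \<open>v \<bullet> y \<le> 0\<close>
      by (simp add: mult_nonpos_nonpos)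
    ultimately show "0 \<le> (a + t *\<^sub>R v) \<bullet> y"
      by (simp add: inner_add_left)
  qed
qed

lemma dual_shift:
  fixes A :: "'a::real_inner set"
  assumes "A \<subseteq> F" "\<And>u. u \<in> F \<Longrightarrow> w \<bullet> u = 0"
  shows "u + w \<in> dual_cone A \<longleftrightarrow> u \<in> dual_cone A"
proof -
  have "a \<bullet> (u + w) = a \<bullet> u" if "a \<in> A" for a
    using assms that by (auto simp: inner_add_right inner_commute)
  then show ?thesis unfolding dual_cone_def by auto
qed

lemma relint_down:
  fixes y :: "'a::euclidean_space"
  assumes "y \<in> relint_in E D" "D \<subseteq> dual_cone A" "subspace E" "F \<subseteq> E"
    "A \<subseteq> F" "z \<in> F" "\<And>u. u \<in> F \<Longrightarrow> w \<bullet> u = 0" "y = z + w"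
  shows "z \<in> relint_in F (dual_cone A)"
proof -
  obtain e where e: "e > 0" "\<And>y'. y' \<in> E \<Longrightarrow> dist y' y < e \<Longrightarrow> y' \<in> D"
    using assms(1) unfolding relint_in_def by blast
  have yE: "y \<in> E" using assms(1) unfolding relint_in_def by blast
  have wE: "w \<in> E" using assms(8) assms(6) assms(4) yE assms(3)
    by (metis add_diff_cancel_left' subset_iff subspace_diff)
  have "z' \<in> dual_cone A" if "z' \<in> F" "dist z' z < e" for z'
  proof -
    have "z' + w \<in> E" using that wE assms(3,4) subspace_add by blast
    moreover have "dist (z' + w) y < e" using that assms(8) by (simp add: dist_norm)
    ultimately have "z' + w \<in> dual_cone A" using e assms(2) by blast
    then show ?thesis using dual_shift[OF assms(5,7)] by blast
  qed
  then show ?thesis unfolding relint_in_def using e assms(6) by blast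
qed

lemma sign_pos:
  fixes y :: "'a::real_inner"
  assumes "y \<in> relint_in E D" "D \<subseteq> {y. v \<bullet> y \<ge> 0}" "v \<in> E" "v \<noteq> 0" "subspace E"
  shows "v \<bullet> y > 0"
proof -
  obtain e where e: "e > 0" "\<And>y'. y' \<in> E \<Longrightarrow> dist y' y < e \<Longrightarrow> y' \<in> D"
    using assms(1) unfolding relint_in_def by blast
  have yE: "y \<in> E" using assms(1) unfolding relint_in_def by blast
  define s where "s = e / (2 * norm v)"
  have s: "s > 0" using e assms(4) by (simp add: s_def)
  have "y - s *\<^sub>R v \<in> E" using yE assms(3,5) by (simp add: subspace_diff subspace_scale)
  moreover have "dist (y - s *\<^sub>R v) y = e / 2" using s assms(4) e
    by (simp add: dist_norm s_def)
  ultimately have "y - s *\<^sub>R v \<in> D" using e by simp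
  then have "v \<bullet> (y - s *\<^sub>R v) \<ge> 0" using assms(2) by blast
  then have "v \<bullet> y \<ge> s * (v \<bullet> v)" by (simp add: inner_diff_right)
  moreover have "v \<bullet> v > 0" using assms(4) by simp
  ultimately show ?thesis using s by (smt (verit) mult_pos_pos)
qed

lemma sign_neg:
  fixes y :: "'a::real_inner"
  assumes "y \<in> relint_in E D" "D \<subseteq> {y. v \<bullet> y \<le> 0}" "v \<in> E" "v \<noteq> 0" "subspace E"
  shows "v \<bullet> y < 0"
proof -
  have "D \<subseteq> {y. (-v) \<bullet> y \<ge> 0}" using assms(2) by auto
  moreover have "-v \<in> E" using assms(3,5) subspace_neg by blast
  ultimately have "(-v) \<bullet> y > 0" using sign_pos[OF assms(1), of "-v"] assms(4,5) by simp
  then show ?thesis by simp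
qed

lemma main_inv:
  fixes E :: "'a::euclidean_space set"
  assumes "yao_yao E P c" "c = 0"
  shows "subspace E \<and> (\<forall>A\<in>P. 0 \<in> A \<and> A \<subseteq> E) \<and> (\<forall>y\<in>E. \<exists>A\<in>P. y \<in> dual_cone A) \<and>
    (\<forall>A\<in>P. \<forall>B\<in>P. relint_in E (dual_cone A) \<inter> relint_in E (dual_cone B) \<noteq> {} \<longrightarrow>
       dual_cone A = dual_cone B)"
  using assms
proof (induction rule: yao_yao.induct)
  case (base c)
  then show ?case by (auto simp: subspace_def dual_cone_def)
next
  case (step E F v Pm c Pp)
  from step.IH(1)[OF step.prems] have IHm: "subspace F" "\<forall>A\<in>Pm. 0 \<in> A \<and> A \<subseteq> F"
    "\<forall>y\<in>F. \<exists>A\<in>Pm. y \<in> dual_cone A"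
    "\<forall>A\<in>Pm. \<forall>B\<in>Pm. relint_in F (dual_cone A) \<inter> relint_in F (dual_cone B) \<noteq> {} \<longrightarrow>
       dual_cone A = dual_cone B" by auto
  from step.IH(2)[OF step.prems] have IHp: "\<forall>A\<in>Pp. 0 \<in> A \<and> A \<subseteq> F"
    "\<forall>y\<in>F. \<exists>A\<in>Pp. y \<in> dual_cone A"
    "\<forall>A\<in>Pp. \<forall>B\<in>Pp. relint_in F (dual_cone A) \<inter> relint_in F (dual_cone B) \<noteq> {} \<longrightarrow>
       dual_cone A = dual_cone B" by auto
  have zF: "0 \<in> F" using IHm(1) subspace_0 by blast
  have zE: "0 \<in> E" using zF step.hyps(4) by blast
  have sE: "subspace E" using step.hyps(1) zE subspace_affine by blast
  have vecF: "vec_dir F = F"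
  proof
    show "vec_dir F \<subseteq> F" unfolding vec_dir_def using IHm(1) subspace_diff by blast
    show "F \<subseteq> vec_dir F" unfolding vec_dir_def using zF by force
  qed
  have vecE: "vec_dir E = E"
  proof
    show "vec_dir E \<subseteq> E" unfolding vec_dir_def using sE subspace_diff by blast
    show "E \<subseteq> vec_dir E" unfolding vec_dir_def using zE by force
  qed
  have vE: "v \<in> E" and vF: "v \<notin> F" using step.hyps(6,7) vecE vecF by auto
  have v0: "v \<noteq> 0" using vF zF by blast
  let ?P = "{ray_minus A v | A. A \<in> Pm} \<union> {ray_plus A v | A. A \<in> Pp}"
  have sub: "\<forall>A\<in>?P. 0 \<in> A \<and> A \<subseteq> E"
  proof
    fix X assume "X \<in> ?P"
    then obtain A t where "A \<subseteq> F" "0 \<in> A" and X: "X = ray_minus A v \<or> X = ray_plus A v"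
      using IHm(2) IHp(1) by blast
    have "0 + 0 *\<^sub>R v \<in> ray_minus A v" "0 + 0 *\<^sub>R v \<in> ray_plus A v"
      using \<open>0 \<in> A\<close> unfolding ray_minus_def ray_plus_def by force+
    moreover have "ray_minus A v \<subseteq> E" "ray_plus A v \<subseteq> E"
      unfolding ray_minus_def ray_plus_def using \<open>A \<subseteq> F\<close> step.hyps(4) vE sE
      by (auto intro!: subspace_add subspace_scale)
    ultimately show "0 \<in> X \<and> X \<subseteq> E" using X by auto
  qed
  have cov: "\<forall>y\<in>E. \<exists>A\<in>?P. y \<in> dual_cone A"
  proof
    fix y assume "y \<in> E"
    obtain z w where zw: "z \<in> F" "\<And>u. u \<in> F \<Longrightarrow> w \<bullet> u = 0" "y = z + w"
      using decomp[OF IHm(1)] by blast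
    show "\<exists>A\<in>?P. y \<in> dual_cone A"
    proof (cases "v \<bullet> y \<ge> 0")
      case True
      obtain A where A: "A \<in> Pp" "z \<in> dual_cone A" using IHp(2) zw(1) by blast
      then have "y \<in> dual_cone A" using dual_shift[of A F w z] IHp(1) zw by auto
      then have "y \<in> dual_cone (ray_plus A v)" using dual_ray_plus IHp(1) A True by blast
      then show ?thesis using A by blast
    next
      case False
      obtain A where A: "A \<in> Pm" "z \<in> dual_cone A" using IHm(3) zw(1) by blast
      then have "y \<in> dual_cone A" using dual_shift[of A F w z] IHm(2) zw by auto
      moreover have "v \<bullet> y \<le> 0" using False by simp
      ultimately have "y \<in> dual_cone (ray_minus A v)" using dual_ray_minus[of A v] IHm(2) A by blast
      then show ?thesis using A by blast
    qed
  qed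
  have disj: "\<forall>X\<in>?P. \<forall>Y\<in>?P. relint_in E (dual_cone X) \<inter> relint_in E (dual_cone Y) \<noteq> {} \<longrightarrow>
       dual_cone X = dual_cone Y"
  proof (intro ballI impI)
    fix X Y assume X: "X \<in> ?P" and Y: "Y \<in> ?P"
      and ne: "relint_in E (dual_cone X) \<inter> relint_in E (dual_cone Y) \<noteq> {}"
    then obtain y where yX: "y \<in> relint_in E (dual_cone X)" and yY: "y \<in> relint_in E (dual_cone Y)"
      by blast
    obtain z w where zw: "z \<in> F" "\<And>u. u \<in> F \<Longrightarrow> w \<bullet> u = 0" "y = z + w"
      using decomp[OF IHm(1)] by blast
    have FE: "F \<subseteq> E" by fact
    show "dual_cone X = dual_cone Y"
    proof -
      { fix A B assume A: "A \<in> Pp" "X = ray_plus A v" and B: "B \<in> Pm" "Y = ray_minus B v"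
        have "v \<bullet> y > 0" using sign_pos[OF yX _ vE v0 sE] dual_ray_plus A IHp(1) by blast
        moreover have "v \<bullet> y < 0" using sign_neg[OF yY _ vE v0 sE] dual_ray_minus B IHm(2) by blast
        ultimately have False by simp }
      note pm = this
      { fix A B assume A: "A \<in> Pm" "X = ray_minus A v" and B: "B \<in> Pp" "Y = ray_plus B v"
        have "v \<bullet> y < 0" using sign_neg[OF yX _ vE v0 sE] dual_ray_minus A IHm(2) by blast
        moreover have "v \<bullet> y > 0" using sign_pos[OF yY _ vE v0 sE] dual_ray_plus B IHp(1) by blast
        ultimately have False by simp }
      note mp = this
      { fix A B assume A: "A \<in> Pp" "X = ray_plus A v" and B: "B \<in> Pp" "Y = ray_plus B v"
        have "z \<in> relint_in F (dual_cone A)"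
          using relint_down[OF yX _ sE FE _ zw] dual_ray_plus A IHp(1) by blast
        moreover have "z \<in> relint_in F (dual_cone B)"
          using relint_down[OF yY _ sE FE _ zw] dual_ray_plus B IHp(1) by blast
        ultimately have "dual_cone A = dual_cone B" using IHp(3) A B by blast
        then have "dual_cone X = dual_cone Y" using A B dual_ray_plus IHp(1) by metis }
      note pp = this
      { fix A B assume A: "A \<in> Pm" "X = ray_minus A v" and B: "B \<in> Pm" "Y = ray_minus B v"
        have "z \<in> relint_in F (dual_cone A)"
          using relint_down[OF yX _ sE FE _ zw] dual_ray_minus A IHm(2) by blast
        moreover have "z \<in> relint_in F (dual_cone B)"
          using relint_down[OF yY _ sE FE _ zw] dual_ray_minus B IHm(2) by blast
        ultimately have "dual_cone A = dual_cone B" using IHm(4) A B by blast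
        then have "dual_cone X = dual_cone Y" using A B dual_ray_minus IHm(2) by metis }
      note mm = this
      show ?thesis using X Y pm mp pp mm by blast
    qed
  qed
  show ?case using sE sub cov disj by blast
qed

theorem mainTheorem2:
  fixes P :: "'a::euclidean_space set set"
  assumes "yao_yao (UNIV :: 'a set) P 0"
  shows "is_partition (UNIV :: 'a set) (dual_cone ` P)"
proof -
  note I = main_inv[OF assms refl]
  have int: "interior D \<subseteq> relint_in UNIV D" for D :: "'a set"
  proof
    fix x assume "x \<in> interior D"
    then obtain e where "e > 0" "ball x e \<subseteq> D" using mem_interior by blast
    then show "x \<in> relint_in UNIV D" unfolding relint_in_def
      by (auto simp: ball_def dist_commute)
  qed
  show ?thesis unfolding is_partition_def
  proof (intro conjI ballI impI)
    show "\<Union> (dual_cone ` P) = UNIV" using I by blast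
  next
    fix X Y assume "X \<in> dual_cone ` P" "Y \<in> dual_cone ` P" "X \<noteq> Y"
    then show "interior X \<inter> interior Y = {}" using I int by blast
  qed
qed

end
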